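(* For all real $a$ and $y$, $$\int_0^{\infty}e^{-t}\,\operatorname{bei}\!\left(a\sqrt{(1+y^2)t}\right)J_0(yt)\,dt=(1+y^2)^{-1/2}I_0\!\left(\frac{a^2y}{4}\right)\sin\!\left(\frac{a^2}{4}\right).$$
   Context: $J_0$, $I_0$ are the Bessel and modified Bessel functions of order $0$. The Kelvin function $\operatorname{bei}$ is $\operatorname{bei}(x)=\sum_{k\ge0}\frac{(-1)^k (x/2)^{4k+2}}{((2k+1)!)^2}$. *)

theory Defs
  imports "HOL-Analysis.Analysis"
begin

definition bessel_J0 :: "real \<Rightarrow> real" where
  "bessel_J0 x = (\<Sum>k. (-1) ^ k * (x / 2) ^ (2 * k) / (fact k) ^ 2)"

definition bessel_I0 :: "real \<Rightarrow> real" where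
  "bessel_I0 x = (\<Sum>k. (x / 2) ^ (2 * k) / (fact k) ^ 2)"

definition kelvin_bei :: "real \<Rightarrow> real" where
  "kelvin_bei x = (\<Sum>k. (-1) ^ k * (x / 2) ^ (4 * k + 2) / (fact (2 * k + 1)) ^ 2)"

end

theory Submission
  imports Defs
begin


definition cJ :: "nat \<Rightarrow> real" where "cJ n = (-1)^n / (fact n)^2"
definition gJ :: "real \<Rightarrow> real" where "gJ u = (\<Sum>n. cJ n * u^n)"
definition qJ :: "real \<Rightarrow> real" where "qJ u = (\<Sum>n. diffs cJ n * u^n)"
definition q2J :: "real \<Rightarrow> real" where "q2J u = (\<Sum>n. diffs (diffs cJ) n * u^n)"
definition pJ :: "real \<Rightarrow> real" where "pJ u = (\<Sum>n. (of_nat n * cJ n) * u^n)"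
definition Jd :: "real \<Rightarrow> real" where "Jd x = x/2 * qJ ((x/2)^2)"
definition Jdd :: "real \<Rightarrow> real" where "Jdd x = qJ ((x/2)^2) / 2 + (x/2)^2 * q2J ((x/2)^2)"

lemma summable_cJ: "summable (\<lambda>n. cJ n * u^n)"
proof (rule summable_comparison_test[OF _ summable_exp[of "\<bar>u\<bar>"]])
  show "\<exists>N. \<forall>n\<ge>N. norm (cJ n * u ^ n) \<le> inverse (fact n) * \<bar>u\<bar> ^ n"
  proof (intro exI allI impI)
    fix n :: nat
    have f1: "(1::real) \<le> fact n" by simp
    have "norm (cJ n * u ^ n) = \<bar>u\<bar>^n / (fact n)^2"
      by (simp add: cJ_def abs_mult power_abs)
    also have "\<dots> \<le> \<bar>u\<bar>^n / fact n"
      by (intro divide_left_mono) (auto simp: power2_eq_square f1)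
    finally show "norm (cJ n * u ^ n) \<le> inverse (fact n) * \<bar>u\<bar> ^ n"
      by (simp add: field_simps)
  qed
qed

lemma summable_dcJ: "summable (\<lambda>n. diffs cJ n * u^n)"
  by (rule termdiff_converges_all) (rule summable_cJ)

lemma summable_ddcJ: "summable (\<lambda>n. diffs (diffs cJ) n * u^n)"
  by (rule termdiff_converges_all) (rule summable_dcJ)

lemma DERIV_gJ: "(gJ has_real_derivative qJ u) (at u)"
  unfolding gJ_def[abs_def] qJ_def
  by (rule termdiffs_strong_converges_everywhere) (rule summable_cJ)

lemma DERIV_qJ: "(qJ has_real_derivative q2J u) (at u)"
  using termdiffs_strong_converges_everywhere[of "diffs cJ" u, OF summable_dcJ]
  by (simp add: qJ_def[abs_def] q2J_def)

lemma summable_pJ: "summable (\<lambda>n. (of_nat n * cJ n) * u^n)"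
proof -
  have "summable (\<lambda>n. (of_nat (Suc n) * cJ (Suc n)) * u^n)"
    using summable_dcJ[of u] by (simp add: diffs_def)
  then show ?thesis by (subst (asm) summable_powser_split_head)
qed

lemma diffs_pJ: "diffs (\<lambda>n. of_nat n * cJ n) = (\<lambda>m. - cJ m)"
proof
  fix m
  have "diffs (\<lambda>n. of_nat n * cJ n) m = of_nat (Suc m) * (of_nat (Suc m) * cJ (Suc m))"
    by (simp add: diffs_def)
  also have "\<dots> = - cJ m"
  proof -
    have nz: "(of_nat (Suc m) :: real) \<noteq> 0" "(fact m :: real) \<noteq> 0" by auto
    show ?thesis unfolding cJ_def fact_Suc of_nat_mult using nz
      by (simp add: divide_simps power2_eq_square)
  qed
  finally show "diffs (\<lambda>n. of_nat n * cJ n) m = - cJ m" .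
qed

lemma DERIV_pJ: "(pJ has_real_derivative - gJ u) (at u)"
proof -
  have "(pJ has_real_derivative (\<Sum>n. diffs (\<lambda>n. of_nat n * cJ n) n * u^n)) (at u)"
    unfolding pJ_def[abs_def]
    by (rule termdiffs_strong_converges_everywhere) (rule summable_pJ)
  also have "(\<Sum>n. diffs (\<lambda>n. of_nat n * cJ n) n * u^n) = - gJ u"
    unfolding diffs_pJ gJ_def using summable_cJ[of u]
    by (simp add: suminf_minus[symmetric])
  finally show ?thesis .
qed

lemma u_qJ: "u * qJ u = pJ u"
proof -
  have "pJ u = of_nat 0 * cJ 0 + (\<Sum>n. (of_nat (Suc n) * cJ (Suc n)) * u^n) * u"
    unfolding pJ_def by (rule powser_split_head(1)[OF summable_pJ])
  also have "(\<Sum>n. (of_nat (Suc n) * cJ (Suc n)) * u^n) = qJ u"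
    unfolding qJ_def by (simp add: diffs_def)
  finally show ?thesis by simp
qed

lemma qJ_q2J: "qJ u + u * q2J u = - gJ u"
proof -
  have "((\<lambda>u. u * qJ u) has_real_derivative (1 * qJ u + u * q2J u)) (at u)"
    by (rule DERIV_cong[OF DERIV_mult[OF DERIV_ident DERIV_qJ]]) simp
  moreover have "((\<lambda>u. u * qJ u) has_real_derivative - gJ u) (at u)"
    using DERIV_pJ by (simp add: u_qJ)
  ultimately show ?thesis using DERIV_unique by fastforce
qed

lemma J0_eq: "bessel_J0 x = gJ ((x/2)^2)"
  unfolding bessel_J0_def gJ_def cJ_def
  by (intro suminf_cong) (simp add: power_mult)

lemma J0_fun: "bessel_J0 = (\<lambda>x. gJ ((x/2)^2))"
  using J0_eq by auto

lemma DERIV_J0: "(bessel_J0 has_real_derivative Jd x) (at x)"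
proof -
  have "((\<lambda>x. gJ ((x/2)^2)) has_real_derivative qJ ((x/2)^2) * (2 * (x/2) * (1/2))) (at x)"
    by (rule DERIV_chain2[OF DERIV_gJ]) (auto intro!: derivative_eq_intros)
  then show ?thesis unfolding J0_fun Jd_def by (simp add: field_simps)
qed

lemma DERIV_Jd: "(Jd has_real_derivative Jdd x) (at x)"
proof -
  have "((\<lambda>x. x/2 * qJ ((x/2)^2)) has_real_derivative
      (1/2 * qJ ((x/2)^2) + x/2 * (q2J ((x/2)^2) * (2 * (x/2) * (1/2))))) (at x)"
  proof -
    have q: "((\<lambda>x. qJ ((x/2)^2)) has_real_derivative q2J ((x/2)^2) * (2 * (x/2) * (1/2))) (at x)"
      by (rule DERIV_chain2[OF DERIV_qJ]) (auto intro!: derivative_eq_intros)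
    have l: "((\<lambda>x. x/2) has_real_derivative 1/2) (at x)"
      by (auto intro!: derivative_eq_intros)
    show ?thesis by (rule DERIV_cong[OF DERIV_mult[OF l q]]) (simp add: field_simps)
  qed
  then show ?thesis unfolding Jd_def[abs_def] Jdd_def by (simp add: field_simps power2_eq_square)
qed

lemma Jd_rel: "Jd x + x * Jdd x = - x * bessel_J0 x"
proof -
  have "Jd x + x * Jdd x = x * (qJ ((x/2)^2) + (x/2)^2 * q2J ((x/2)^2))"
    unfolding Jd_def Jdd_def by (simp add: field_simps)
  also have "\<dots> = - x * bessel_J0 x" by (simp add: qJ_q2J J0_eq)
  finally show ?thesis .
qed

lemma J0_0: "bessel_J0 0 = 1"
  unfolding J0_eq gJ_def using powser_zero[of cJ] by (simp add: cJ_def)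

lemma Jd_0: "Jd 0 = 0" by (simp add: Jd_def)

lemma Jdd_0: "Jdd 0 = -1/2"
proof -
  have "qJ 0 = diffs cJ 0" unfolding qJ_def using powser_zero[of "diffs cJ"] by simp
  also have "\<dots> = -1" by (simp add: diffs_def cJ_def)
  finally show ?thesis by (simp add: Jdd_def)
qed

lemma J0_even: "bessel_J0 (-x) = bessel_J0 x" by (simp add: J0_eq power2_eq_square)
lemma Jd_odd: "Jd (-x) = - Jd x" by (simp add: Jd_def power2_eq_square)

lemma energy_pos: assumes "x \<ge> 0" shows "(bessel_J0 x)^2 + (Jd x)^2 \<le> 1"
proof -
  let ?E = "\<lambda>x. (bessel_J0 x)^2 + (Jd x)^2"
  have "?E x \<le> ?E 0"
  proof (rule DERIV_nonpos_imp_nonincreasing[OF assms])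
    fix z :: real assume z: "0 \<le> z" "z \<le> x"
    have d: "(?E has_real_derivative 2 * Jd z * (bessel_J0 z + Jdd z)) (at z)"
      by (rule derivative_eq_intros DERIV_J0 DERIV_Jd refl | simp add: field_simps power2_eq_square)+
    have "2 * Jd z * (bessel_J0 z + Jdd z) \<le> 0"
    proof (cases "z = 0")
      case True then show ?thesis by (simp add: Jd_0)
    next
      case False
      with z have zp: "z > 0" by simp
      have "bessel_J0 z + Jdd z = - Jd z / z"
        using Jd_rel[of z] zp by (simp add: field_simps)
      then have "2 * Jd z * (bessel_J0 z + Jdd z) = - 2 * (Jd z)^2 / z"
        by (simp add: power2_eq_square)
      also have "\<dots> \<le> 0" using zp by simp
      finally show ?thesis .
    qed
    with d show "\<exists>y. (?E has_real_derivative y) (at z) \<and> y \<le> 0" by blast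
  qed
  then show ?thesis by (simp add: J0_0 Jd_0)
qed

lemma energy: "(bessel_J0 x)^2 + (Jd x)^2 \<le> 1"
proof (cases "x \<ge> 0")
  case True then show ?thesis by (rule energy_pos)
next
  case False
  then have "(bessel_J0 (-x))^2 + (Jd (-x))^2 \<le> 1" by (intro energy_pos) simp
  then show ?thesis by (simp add: J0_even Jd_odd)
qed

lemma J0_bound: "\<bar>bessel_J0 x\<bar> \<le> 1"
proof -
  have "(bessel_J0 x)^2 \<le> 1" using energy[of x] by (smt (verit) zero_le_power2)
  then show ?thesis by (simp add: abs_square_le_1)
qed

lemma Jd_bound: "\<bar>Jd x\<bar> \<le> 1"
proof -
  have "(Jd x)^2 \<le> 1" using energy[of x] by (smt (verit) zero_le_power2)
  then show ?thesis by (simp add: abs_square_le_1)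
qed

lemma xJd_bound_pos: assumes "x \<ge> 0" shows "\<bar>x * Jd x\<bar> \<le> x^2/2"
proof -
  have d: "((\<lambda>x. x * Jd x) has_real_derivative - z * bessel_J0 z) (at z)" for z
  proof -
    have "((\<lambda>x. x * Jd x) has_real_derivative 1 * Jd z + z * Jdd z) (at z)"
      by (rule DERIV_cong[OF DERIV_mult[OF DERIV_ident DERIV_Jd]]) simp
    then show ?thesis using Jd_rel[of z] by simp
  qed
  have "x^2/2 - x * Jd x \<ge> 0^2/2 - 0 * Jd 0"
  proof (rule DERIV_nonneg_imp_nondecreasing[OF assms])
    fix z :: real assume z: "0 \<le> z" "z \<le> x"
    have "((\<lambda>x. x^2/2 - x * Jd x) has_real_derivative (z - - z * bessel_J0 z)) (at z)"
      by (rule derivative_eq_intros d | simp)+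
    moreover have "z - - z * bessel_J0 z \<ge> 0"
      using J0_bound[of z] z mult_left_mono[of "-1" "bessel_J0 z" z] by (auto simp: abs_le_iff)
    ultimately show "\<exists>y. ((\<lambda>x. x^2/2 - x * Jd x) has_real_derivative y) (at z) \<and> 0 \<le> y" by blast
  qed
  moreover have "x^2/2 + x * Jd x \<ge> 0^2/2 + 0 * Jd 0"
  proof (rule DERIV_nonneg_imp_nondecreasing[OF assms])
    fix z :: real assume z: "0 \<le> z" "z \<le> x"
    have "((\<lambda>x. x^2/2 + x * Jd x) has_real_derivative (z + - z * bessel_J0 z)) (at z)"
      by (rule derivative_eq_intros d | simp)+
    moreover have "z + - z * bessel_J0 z \<ge> 0"
      using J0_bound[of z] z mult_left_mono[of "bessel_J0 z" 1 z] by (auto simp: abs_le_iff)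
    ultimately show "\<exists>y. ((\<lambda>x. x^2/2 + x * Jd x) has_real_derivative y) (at z) \<and> 0 \<le> y" by blast
  qed
  ultimately show ?thesis by (simp add: abs_le_iff)
qed

lemma xJd_bound: "\<bar>x * Jd x\<bar> \<le> x^2/2"
proof (cases "x \<ge> 0")
  case True then show ?thesis by (rule xJd_bound_pos)
next
  case False
  then have "\<bar>(-x) * Jd (-x)\<bar> \<le> (-x)^2/2" by (intro xJd_bound_pos) simp
  then show ?thesis by (simp add: Jd_odd)
qed

lemma Jdd_bound: "\<bar>Jdd x\<bar> \<le> 3/2"
proof (cases "x = 0")
  case True then show ?thesis by (simp add: Jdd_0)
next
  case False
  have "Jdd x = - bessel_J0 x - Jd x / x"
    using Jd_rel[of x] False by (simp add: field_simps)
  moreover have "\<bar>Jd x / x\<bar> \<le> 1/2"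
  proof -
    have "\<bar>Jd x / x\<bar> = \<bar>x * Jd x\<bar> / x^2"
      using False by (simp add: abs_mult power2_eq_square field_simps)
    also have "\<dots> \<le> (x^2/2) / x^2" by (intro divide_right_mono xJd_bound) simp
    also have "\<dots> = 1/2" using False by simp
    finally show ?thesis .
  qed
  moreover have "\<bar>- bessel_J0 x - Jd x / x\<bar> \<le> \<bar>bessel_J0 x\<bar> + \<bar>Jd x / x\<bar>"
    by (smt (verit))
  ultimately show ?thesis using J0_bound[of x] by linarith
qed

lemma Jd_lip: "\<bar>Jd b - Jd a\<bar> \<le> 3/2 * \<bar>b - a\<bar>"
proof -
  have *: "\<bar>Jd b - Jd a\<bar> \<le> 3/2 * \<bar>b - a\<bar>" if ab: "a < b" for a b
  proof -
    obtain z where "a < z" "z < b" "Jd b - Jd a = (b - a) * Jdd z"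
      using MVT2[OF ab, of Jd Jdd] DERIV_Jd by blast
    moreover have "\<bar>Jdd z\<bar> * \<bar>b - a\<bar> \<le> 3/2 * \<bar>b - a\<bar>"
      by (rule mult_right_mono[OF Jdd_bound]) simp
    ultimately show ?thesis by (simp add: abs_mult mult.commute)
  qed
  show ?thesis
    using *[of a b] *[of b a] by (cases a b rule: linorder_cases) (auto simp: abs_minus_commute)
qed

lemma J0_taylor: "\<bar>bessel_J0 b - bessel_J0 a - (b - a) * Jd a\<bar> \<le> 3/2 * (b - a)^2"
proof -
  define \<phi> where "\<phi> = (\<lambda>u. bessel_J0 u - u * Jd a)"
  have d: "(\<phi> has_real_derivative Jd u - Jd a) (at u)" for u
    unfolding \<phi>_def by (rule derivative_eq_intros DERIV_J0 | simp)+
  have key: "\<bar>\<phi> b - \<phi> a\<bar> \<le> 3/2 * (b - a)^2"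
  proof (cases a b rule: linorder_cases)
    case less
    have "\<exists>z>a. z < b \<and> \<phi> b - \<phi> a = (b - a) * (Jd z - Jd a)"
      by (rule MVT2[OF less]) (rule d)
    then obtain z where z: "a < z" "z < b" "\<phi> b - \<phi> a = (b - a) * (Jd z - Jd a)"
      by blast
    have "\<bar>Jd z - Jd a\<bar> \<le> 3/2 * \<bar>b - a\<bar>"
      using Jd_lip[of z a] z by simp
    then have "\<bar>b - a\<bar> * \<bar>Jd z - Jd a\<bar> \<le> \<bar>b - a\<bar> * (3/2 * \<bar>b - a\<bar>)"
      by (intro mult_left_mono) auto
    then show ?thesis using z by (simp add: abs_mult power2_eq_square)
  next
    case equal then show ?thesis by simp
  next
    case greater
    have "\<exists>z>b. z < a \<and> \<phi> a - \<phi> b = (a - b) * (Jd z - Jd a)"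
      by (rule MVT2[OF greater]) (rule d)
    then obtain z where z: "b < z" "z < a" "\<phi> a - \<phi> b = (a - b) * (Jd z - Jd a)"
      by blast
    have "\<bar>Jd z - Jd a\<bar> \<le> 3/2 * \<bar>b - a\<bar>"
      using Jd_lip[of z a] z by simp
    then have "\<bar>b - a\<bar> * \<bar>Jd z - Jd a\<bar> \<le> \<bar>b - a\<bar> * (3/2 * \<bar>b - a\<bar>)"
      by (intro mult_left_mono) auto
    moreover have "\<bar>\<phi> b - \<phi> a\<bar> = \<bar>b - a\<bar> * \<bar>Jd z - Jd a\<bar>"
      using z by (simp add: abs_mult abs_minus_commute)
    ultimately show ?thesis by (simp add: power2_eq_square)
  qed
  then show ?thesis unfolding \<phi>_def by (simp add: algebra_simps)
qed



lemma cont_J0: "continuous_on S (\<lambda>t. bessel_J0 (y * t))"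
  by (intro continuous_at_imp_continuous_on ballI isCont_o2[OF _ DERIV_isCont[OF DERIV_J0]])
     (auto intro!: continuous_intros)

lemma cont_Jd: "continuous_on S (\<lambda>t. Jd (y * t))"
  by (intro continuous_at_imp_continuous_on ballI isCont_o2[OF _ DERIV_isCont[OF DERIV_Jd]])
     (auto intro!: continuous_intros)

lemma exp_pow_has_integral: "((\<lambda>t::real. exp (-t) * t^k) has_integral fact k) {0..}"
proof -
  have "((\<lambda>t. t powr (real k + 1 - 1) / exp t) has_integral Gamma (real k + 1)) {0..}"
    by (rule Gamma_integral_real) simp
  moreover have "Gamma (real k + 1) = fact k" using Gamma_fact[of k] by (simp add: add.commute)
  ultimately have "((\<lambda>t. t powr (real k + 1 - 1) / exp t) has_integral fact k) {0..}" by simp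
  then show ?thesis
  proof (rule has_integral_spike_finite[where S="{0}", rotated 2])
    fix x :: real assume "x \<in> {0..} - {0}"
    then have x: "x > 0" by auto
    have "x powr (real k + 1 - 1) = x^k" using x by (simp add: powr_realpow)
    then show "exp (-x) * x^k = x powr (real k + 1 - 1) / exp x" by (simp add: exp_minus field_simps)
  qed auto
qed

lemma exp_pow_integrable: "(\<lambda>t::real. exp (-t) * t^k) integrable_on {0..}"
  using exp_pow_has_integral by blast

lemma exp_pow_abs_integrable: "(\<lambda>t::real. exp (-t) * t^k) absolutely_integrable_on {0..}"
  by (rule nonnegative_absolutely_integrable_1[OF exp_pow_integrable]) auto

lemma bounded_abs_integrable:
  fixes \<phi> :: "real \<Rightarrow> real"
  assumes cont: "continuous_on {0..} \<phi>" and bnd: "\<And>t. t \<ge> 0 \<Longrightarrow> \<bar>\<phi> t\<bar> \<le> C"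
  shows "(\<lambda>t. exp (-t) * t^k * \<phi> t) absolutely_integrable_on {0..}"
proof (rule measurable_bounded_by_integrable_imp_absolutely_integrable)
  show "(\<lambda>t. exp (-t) * t^k * \<phi> t) \<in> borel_measurable (lebesgue_on {0..})"
  proof (rule continuous_imp_measurable_on_sets_lebesgue)
    show "continuous_on {0..} (\<lambda>t. exp (-t) * t^k * \<phi> t)"
      by (intro continuous_on_mult cont) (intro continuous_intros)+
  qed auto
  show "{0::real..} \<in> sets lebesgue" by simp
  show "(\<lambda>t. C * (exp (-t) * t^k)) integrable_on {0..}"
    by (intro integrable_on_mult_right exp_pow_integrable)
  fix t :: real assume "t \<in> {0..}"
  then have t: "t \<ge> 0" by simp
  have "norm (exp (-t) * t^k * \<phi> t) = (exp (-t) * t^k) * \<bar>\<phi> t\<bar>" using t by (simp add: abs_mult)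
  also have "\<dots> \<le> (exp (-t) * t^k) * C" by (intro mult_left_mono bnd t) (simp add: t)
  finally show "norm (exp (-t) * t^k * \<phi> t) \<le> C * (exp (-t) * t^k)" by (simp add: mult.commute)
qed

definition MJ :: "nat \<Rightarrow> real \<Rightarrow> real" where
  "MJ k y = integral {0..} (\<lambda>t. exp (-t) * t^k * bessel_J0 (y * t))"
definition DJ :: "nat \<Rightarrow> real \<Rightarrow> real" where
  "DJ k y = integral {0..} (\<lambda>t. exp (-t) * t^k * Jd (y * t))"

lemma intJ0: "(\<lambda>t. exp (-t) * t^k * bessel_J0 (y * t)) absolutely_integrable_on {0..}"
  by (rule bounded_abs_integrable[OF cont_J0 J0_bound])

lemma intJd: "(\<lambda>t. exp (-t) * t^k * Jd (y * t)) absolutely_integrable_on {0..}"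
  by (rule bounded_abs_integrable[OF cont_Jd Jd_bound])

lemma intJ0': "(\<lambda>t. exp (-t) * t^k * bessel_J0 (y * t)) integrable_on {0..}"
  using intJ0 set_lebesgue_integral_eq_integral(1) by blast
lemma intJd': "(\<lambda>t. exp (-t) * t^k * Jd (y * t)) integrable_on {0..}"
  using intJd set_lebesgue_integral_eq_integral(1) by blast

lemma FTC_inf:
  fixes F f :: "real \<Rightarrow> real"
  assumes der: "\<And>x. (F has_real_derivative f x) (at x)"
    and int: "f absolutely_integrable_on {0..}"
    and lim: "(F \<longlongrightarrow> 0) at_top"
  shows "integral {0..} f = - F 0"
proof -
  have "((\<lambda>b. set_lebesgue_integral lebesgue {0..b} f) \<longlongrightarrow> set_lebesgue_integral lebesgue {0..} f) at_top"
    by (rule tendsto_set_lebesgue_integral_at_top) (use int in auto)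
  moreover have "set_lebesgue_integral lebesgue {0..} f = integral {0..} f"
    by (rule set_lebesgue_integral_eq_integral(2)[OF int])
  moreover have "eventually (\<lambda>b. set_lebesgue_integral lebesgue {0..b} f = F b - F 0) at_top"
  proof (rule eventually_at_top_linorderI[of 0])
    fix b :: real assume b: "b \<ge> 0"
    have "f absolutely_integrable_on {0..b}"
      by (rule absolutely_integrable_on_subinterval[OF int]) auto
    then have "set_lebesgue_integral lebesgue {0..b} f = integral {0..b} f"
      by (rule set_lebesgue_integral_eq_integral(2))
    also have "(f has_integral F b - F 0) {0..b}"
    proof (rule fundamental_theorem_of_calculus)
      show "0 \<le> b" by (rule b)
      fix x assume "x \<in> {0..b}"
      have "(F has_real_derivative f x) (at x within {0..b})"
        by (rule has_field_derivative_at_within[OF der])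
      then show "(F has_vector_derivative f x) (at x within {0..b})"
        by (simp add: has_real_derivative_iff_has_vector_derivative)
    qed
    then have "integral {0..b} f = F b - F 0" by (rule integral_unique)
    finally show "set_lebesgue_integral lebesgue {0..b} f = F b - F 0" .
  qed
  ultimately have A: "((\<lambda>b. F b - F 0) \<longlongrightarrow> integral {0..} f) at_top"
    using Lim_transform_eventually by force
  have B: "((\<lambda>b. F b - F 0) \<longlongrightarrow> 0 - F 0) at_top"
    by (intro tendsto_intros lim)
  have "integral {0..} f = 0 - F 0" by (rule tendsto_unique[OF _ A B]) simp
  then show ?thesis by simp
qed

lemma exp_pow_tendsto: "((\<lambda>t::real. exp (-t) * t^k) \<longlongrightarrow> 0) at_top"
proof -
  have "(\<lambda>t::real. exp (-t) * t^k) = (\<lambda>x. x^k / exp x)"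
    by (simp add: fun_eq_iff exp_minus field_simps)
  then show ?thesis using tendsto_power_div_exp_0[of k] by simp
qed

lemma bounded_tendsto:
  fixes \<phi> :: "real \<Rightarrow> real"
  assumes "\<And>t. t \<ge> 0 \<Longrightarrow> \<bar>\<phi> t\<bar> \<le> 1"
  shows "((\<lambda>t. exp (-t) * t^k * \<phi> t) \<longlongrightarrow> 0) at_top"
proof (rule Lim_null_comparison[OF _ exp_pow_tendsto[of k]])
  show "\<forall>\<^sub>F x in at_top. norm (exp (- x) * x ^ k * \<phi> x) \<le> exp (- x) * x ^ k"
  proof (rule eventually_at_top_linorderI[of 0])
    fix t :: real assume t: "t \<ge> 0"
    have "norm (exp (- t) * t ^ k * \<phi> t) = exp (-t) * t^k * \<bar>\<phi> t\<bar>" using t by (simp add: abs_mult)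
    also have "\<dots> \<le> exp (-t) * t^k * 1" by (intro mult_left_mono assms t) (simp add: t)
    finally show "norm (exp (- t) * t ^ k * \<phi> t) \<le> exp (- t) * t ^ k" by simp
  qed
qed

lemma DERIV_prod3:
  fixes a b c :: "real \<Rightarrow> real"
  assumes "(a has_real_derivative a') (at t)" "(b has_real_derivative b') (at t)"
    "(c has_real_derivative c') (at t)"
  shows "((\<lambda>t. a t * b t * c t) has_real_derivative a' * b t * c t + a t * b' * c t + a t * b t * c') (at t)"
  using DERIV_mult[OF DERIV_mult[OF assms(1,2)] assms(3)] by (simp add: algebra_simps)

lemma DERIV_expm: "((\<lambda>t::real. exp (-t)) has_real_derivative - exp (-t)) (at t)"
  by (auto intro!: derivative_eq_intros)

lemma DERIV_powSuc: "((\<lambda>t::real. t ^ Suc k) has_real_derivative of_nat (Suc k) * t^k) (at t)"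
  using DERIV_pow[of "Suc k" t] by simp

lemma DERIV_J0y: "((\<lambda>t. bessel_J0 (y * t)) has_real_derivative y * Jd (y * t)) (at t)"
  using DERIV_chain2[OF DERIV_J0 DERIV_cmult[OF DERIV_ident, of y]] by (simp add: mult.commute)

lemma DERIV_Jdy: "((\<lambda>t. Jd (y * t)) has_real_derivative y * Jdd (y * t)) (at t)"
  using DERIV_chain2[OF DERIV_Jd DERIV_cmult[OF DERIV_ident, of y]] by (simp add: mult.commute)


lemma R1: "MJ (Suc k) y - of_nat (Suc k) * MJ k y = y * DJ (Suc k) y"
proof -
  define F where "F = (\<lambda>t. exp (-t) * t^(Suc k) * bessel_J0 (y * t))"
  define f where "f = (\<lambda>t. of_nat (Suc k) * (exp (-t) * t^k * bessel_J0 (y * t))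
      - exp (-t) * t^(Suc k) * bessel_J0 (y * t) + y * (exp (-t) * t^(Suc k) * Jd (y * t)))"
  have der: "(F has_real_derivative f t) (at t)" for t
    unfolding F_def f_def
    by (rule DERIV_cong[OF DERIV_prod3[OF DERIV_expm DERIV_powSuc DERIV_J0y]]) (simp add: algebra_simps)
  have int: "f absolutely_integrable_on {0..}"
  proof -
    have a1: "(\<lambda>t. of_nat (Suc k) * (exp (-t) * t^k * bessel_J0 (y * t))) absolutely_integrable_on {0..}"
      by (rule set_integrable_mult_right) (rule intJ0)
    have a2: "(\<lambda>t. y * (exp (-t) * t^(Suc k) * Jd (y * t))) absolutely_integrable_on {0..}"
      by (rule set_integrable_mult_right) (rule intJd)
    show ?thesis unfolding f_def
      by (rule set_integral_add(1)[OF set_integral_diff(1)[OF a1 intJ0] a2])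
  qed
  have lim: "(F \<longlongrightarrow> 0) at_top"
    unfolding F_def by (rule bounded_tendsto[OF J0_bound])
  have "integral {0..} f = - F 0" by (rule FTC_inf[OF der int lim])
  moreover have "F 0 = 0" by (simp add: F_def)
  moreover have "integral {0..} f = of_nat (Suc k) * MJ k y - MJ (Suc k) y + y * DJ (Suc k) y"
  proof -
    have i1: "(\<lambda>t. of_nat (Suc k) * (exp (-t) * t^k * bessel_J0 (y * t))) integrable_on {0..}"
      by (rule integrable_on_mult_right) (rule intJ0')
    have i2: "(\<lambda>t. y * (exp (-t) * t^(Suc k) * Jd (y * t))) integrable_on {0..}"
      by (rule integrable_on_mult_right) (rule intJd')
    have "integral {0..} f = integral {0..} (\<lambda>t. of_nat (Suc k) * (exp (-t) * t^k * bessel_J0 (y * t)))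
       - integral {0..} (\<lambda>t. exp (-t) * t^(Suc k) * bessel_J0 (y * t))
       + integral {0..} (\<lambda>t. y * (exp (-t) * t^(Suc k) * Jd (y * t)))"
      unfolding f_def by (simp only: integral_add integral_diff i1 i2 intJ0' integrable_diff)
    then show ?thesis unfolding MJ_def DJ_def by simp
  qed
  ultimately show ?thesis by simp
qed


lemma R2: "DJ (Suc k) y - of_nat k * DJ k y = - y * MJ (Suc k) y"
proof -
  define F where "F = (\<lambda>t. exp (-t) * t^(Suc k) * Jd (y * t))"
  define f where "f = (\<lambda>t. of_nat k * (exp (-t) * t^k * Jd (y * t))
      - exp (-t) * t^(Suc k) * Jd (y * t) - y * (exp (-t) * t^(Suc k) * bessel_J0 (y * t)))"
  have der: "(F has_real_derivative f t) (at t)" for t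
  proof -
    have d: "(F has_real_derivative
        - exp (-t) * t^(Suc k) * Jd (y * t) + exp (-t) * (of_nat (Suc k) * t^k) * Jd (y * t)
        + exp (-t) * t^(Suc k) * (y * Jdd (y * t))) (at t)"
      unfolding F_def by (rule DERIV_prod3[OF DERIV_expm DERIV_powSuc DERIV_Jdy])
    have rel: "(y * t) * Jdd (y * t) = - (y * t) * bessel_J0 (y * t) - Jd (y * t)"
      using Jd_rel[of "y * t"] by simp
    have "exp (-t) * t^(Suc k) * (y * Jdd (y * t)) = exp (-t) * t^k * ((y * t) * Jdd (y * t))"
      by (simp add: algebra_simps)
    also have "\<dots> = exp (-t) * t^k * (- (y * t) * bessel_J0 (y * t) - Jd (y * t))"
      by (simp only: rel)
    finally have e: "exp (-t) * t^(Suc k) * (y * Jdd (y * t)) =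
        exp (-t) * t^k * (- (y * t) * bessel_J0 (y * t) - Jd (y * t))" .
    have "- exp (-t) * t^(Suc k) * Jd (y * t) + exp (-t) * (of_nat (Suc k) * t^k) * Jd (y * t)
        + exp (-t) * t^(Suc k) * (y * Jdd (y * t)) = f t"
      unfolding e f_def by (simp add: algebra_simps)
    with d show ?thesis by simp
  qed
  have int: "f absolutely_integrable_on {0..}"
  proof -
    have a1: "(\<lambda>t. of_nat k * (exp (-t) * t^k * Jd (y * t))) absolutely_integrable_on {0..}"
      by (rule set_integrable_mult_right) (rule intJd)
    have a2: "(\<lambda>t. y * (exp (-t) * t^(Suc k) * bessel_J0 (y * t))) absolutely_integrable_on {0..}"
      by (rule set_integrable_mult_right) (rule intJ0)
    show ?thesis unfolding f_def
      by (rule set_integral_diff(1)[OF set_integral_diff(1)[OF a1 intJd] a2])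
  qed
  have lim: "(F \<longlongrightarrow> 0) at_top"
    unfolding F_def by (rule bounded_tendsto[OF Jd_bound])
  have "integral {0..} f = - F 0" by (rule FTC_inf[OF der int lim])
  moreover have "F 0 = 0" by (simp add: F_def)
  moreover have "integral {0..} f = of_nat k * DJ k y - DJ (Suc k) y - y * MJ (Suc k) y"
  proof -
    have i1: "(\<lambda>t. of_nat k * (exp (-t) * t^k * Jd (y * t))) integrable_on {0..}"
      by (rule integrable_on_mult_right) (rule intJd')
    have i2: "(\<lambda>t. y * (exp (-t) * t^(Suc k) * bessel_J0 (y * t))) integrable_on {0..}"
      by (rule integrable_on_mult_right) (rule intJ0')
    have "integral {0..} f = integral {0..} (\<lambda>t. of_nat k * (exp (-t) * t^k * Jd (y * t)))
       - integral {0..} (\<lambda>t. exp (-t) * t^(Suc k) * Jd (y * t))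
       - integral {0..} (\<lambda>t. y * (exp (-t) * t^(Suc k) * bessel_J0 (y * t)))"
      unfolding f_def by (simp only: integral_diff i1 i2 intJd' integrable_diff)
    then show ?thesis unfolding MJ_def DJ_def by simp
  qed
  ultimately show ?thesis by simp
qed

lemma DERIV_quad:
  fixes f :: "real \<Rightarrow> real"
  assumes bnd: "\<And>z. \<bar>f z - f y - (z - y) * L\<bar> \<le> C * (z - y)^2"
  shows "(f has_real_derivative L) (at y)"
proof -
  have "((\<lambda>z. (f z - f y) / (z - y) - L) \<longlongrightarrow> 0) (at y)"
  proof (rule Lim_null_comparison)
    show "\<forall>\<^sub>F z in at y. norm ((f z - f y) / (z - y) - L) \<le> C * \<bar>z - y\<bar>"
    proof (rule eventually_at_topological[THEN iffD2], intro exI conjI ballI impI)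
      show "open (UNIV :: real set)" "y \<in> UNIV" by auto
      fix z :: real assume "z \<noteq> y"
      then have nz: "z - y \<noteq> 0" by simp
      have "(f z - f y) / (z - y) - L = (f z - f y - (z - y) * L) / (z - y)"
        using nz by (simp add: field_simps)
      then have "norm ((f z - f y) / (z - y) - L) = \<bar>f z - f y - (z - y) * L\<bar> / \<bar>z - y\<bar>"
        by (simp add: abs_divide)
      also have "\<dots> \<le> C * (z - y)^2 / \<bar>z - y\<bar>"
        by (intro divide_right_mono bnd) simp
      also have "\<dots> = C * \<bar>z - y\<bar>"
      proof -
        have a: "\<bar>z - y\<bar> > 0" using nz by simp
        have "C * (z - y)^2 / \<bar>z - y\<bar> = C * \<bar>z - y\<bar>^2 / \<bar>z - y\<bar>"
          by simp
        also have "\<dots> = C * \<bar>z - y\<bar>" using a by (simp add: power2_eq_square del: abs_mult_self_eq)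
        finally show ?thesis .
      qed
      finally show "norm ((f z - f y) / (z - y) - L) \<le> C * \<bar>z - y\<bar>" .
    qed
    show "((\<lambda>z. C * \<bar>z - y\<bar>) \<longlongrightarrow> 0) (at y)"
    proof -
      have "((\<lambda>z. C * \<bar>z - y\<bar>) \<longlongrightarrow> C * \<bar>y - y\<bar>) (at y)"
        by (intro tendsto_intros)
      then show ?thesis by simp
    qed
  qed
  then have "((\<lambda>z. (f z - f y) / (z - y) - L + L) \<longlongrightarrow> 0 + L) (at y)"
    by (intro tendsto_intros)
  then show ?thesis by (simp add: has_field_derivative_iff)
qed

lemma M0_deriv: "(MJ 0 has_real_derivative DJ 1 y) (at y)"
proof (rule DERIV_quad[where C = 3])
  fix z :: real
  let ?g = "\<lambda>t. exp (-t) * (bessel_J0 (z * t) - bessel_J0 (y * t) - (z - y) * (t * Jd (y * t)))"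
  have ig: "?g integrable_on {0..}"
  proof -
    have "(\<lambda>t. exp (-t) * t^0 * bessel_J0 (z * t) - exp (-t) * t^0 * bessel_J0 (y * t)
        - (z - y) * (exp (-t) * t^1 * Jd (y * t))) integrable_on {0..}"
      by (intro integrable_diff integrable_on_mult_right intJ0' intJd')
    then show ?thesis by (simp add: algebra_simps)
  qed
  have "MJ 0 z - MJ 0 y - (z - y) * DJ 1 y = integral {0..} (\<lambda>t. exp (-t) * t^0 * bessel_J0 (z * t) - exp (-t) * t^0 * bessel_J0 (y * t)
        - (z - y) * (exp (-t) * t^1 * Jd (y * t)))"
    unfolding MJ_def DJ_def
    by (simp only: integral_diff integral_mult_right intJ0' intJd' integrable_diff integrable_on_mult_right)
  also have "\<dots> = integral {0..} ?g" by (simp add: algebra_simps)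
  finally have eq: "MJ 0 z - MJ 0 y - (z - y) * DJ 1 y = integral {0..} ?g" .
  have ih: "(\<lambda>t. 3/2 * (z - y)^2 * (exp (-t) * t^2)) integrable_on {0..}"
    by (intro integrable_on_mult_right exp_pow_integrable)
  have "norm (integral {0..} ?g) \<le> integral {0..} (\<lambda>t. 3/2 * (z - y)^2 * (exp (-t) * t^2))"
  proof (rule integral_norm_bound_integral[OF ig ih])
    fix t :: real assume "t \<in> {0..}"
    have e: "(z - y) * (t * Jd (y * t)) = (z * t - y * t) * Jd (y * t)" by (simp add: algebra_simps)
    have "norm (?g t) = exp (-t) * \<bar>bessel_J0 (z * t) - bessel_J0 (y * t) - (z * t - y * t) * Jd (y * t)\<bar>"
      by (simp only: e real_norm_def abs_mult) simp
    also have "\<dots> \<le> exp (-t) * (3/2 * (z * t - y * t)^2)"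
      by (intro mult_left_mono J0_taylor) simp
    also have "\<dots> = 3/2 * (z - y)^2 * (exp (-t) * t^2)"
      by (simp add: power2_eq_square algebra_simps)
    finally show "norm (?g t) \<le> 3/2 * (z - y)^2 * (exp (-t) * t^2)" .
  qed
  also have "integral {0..} (\<lambda>t. 3/2 * (z - y)^2 * (exp (-t) * t^2)) = 3 * (z - y)^2"
    using integral_unique[OF exp_pow_has_integral[of 2]] by (simp add: numeral_2_eq_2)
  finally have nb: "norm (integral {0..} ?g) \<le> 3 * (z - y)^2" .
  show "\<bar>MJ 0 z - MJ 0 y - (z - y) * DJ 1 y\<bar> \<le> 3 * (z - y)^2"
    unfolding eq using nb by (simp only: real_norm_def)
qed

lemma MJ1: "(1 + y^2) * MJ 1 y = MJ 0 y" and DJ1: "DJ 1 y = - y * MJ 1 y"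
proof -
  show d: "DJ 1 y = - y * MJ 1 y" using R2[of 0 y] by simp
  have "MJ 1 y - MJ 0 y = y * DJ 1 y" using R1[of 0 y] by simp
  then show "(1 + y^2) * MJ 1 y = MJ 0 y" unfolding d by (simp add: algebra_simps power2_eq_square)
qed

lemma MJ0_0: "MJ 0 0 = 1"
  unfolding MJ_def using integral_unique[OF exp_pow_has_integral[of 0]] by (simp add: J0_0)

lemma MJ0: "MJ 0 y = 1 / sqrt (1 + y^2)"
proof -
  define \<phi> where "\<phi> = (\<lambda>y. MJ 0 y * sqrt (1 + y^2))"
  have "(\<phi> has_real_derivative 0) (at x)" for x
  proof -
    have s: "1 + x^2 > 0" by (simp add: add_pos_nonneg)
    have "(\<phi> has_real_derivative DJ 1 x * sqrt (1 + x^2) + MJ 0 x * (inverse (sqrt (1 + x^2)) / 2 * (2 * x))) (at x)"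
    proof -
      have dd: "((\<lambda>x. 1 + x^2) has_real_derivative 2 * x) (at x)"
        by (auto intro!: derivative_eq_intros)
      have ds: "((\<lambda>x. sqrt (1 + x^2)) has_real_derivative inverse (sqrt (1 + x^2)) / 2 * (2 * x)) (at x)"
        by (rule DERIV_chain2[OF DERIV_real_sqrt[OF s] dd])
      show ?thesis unfolding \<phi>_def
        using DERIV_mult[OF M0_deriv ds] by (simp add: algebra_simps)
    qed
    moreover have "DJ 1 x * sqrt (1 + x^2) + MJ 0 x * (inverse (sqrt (1 + x^2)) / 2 * (2 * x)) = 0"
    proof -
      have m1: "MJ 1 x = MJ 0 x / (1 + x^2)" using MJ1[of x] s by (simp add: field_simps)
      have sq: "sqrt (1 + x^2) * sqrt (1 + x^2) = 1 + x^2" using s by simp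
      have sp: "sqrt (1 + x^2) > 0" using s by simp
      show ?thesis unfolding DJ1 m1 using sp sq
        by (simp add: field_simps)
    qed
    ultimately show ?thesis by simp
  qed
  then have "\<phi> y = \<phi> 0" using DERIV_isconst_all by blast
  then have "MJ 0 y * sqrt (1 + y^2) = 1" by (simp add: \<phi>_def MJ0_0)
  moreover have "sqrt (1 + y^2) > 0" by (simp add: add_pos_nonneg)
  ultimately show ?thesis by (simp add: field_simps)
qed


lemma MJ_rec: "(1 + y^2) * MJ (Suc (Suc k)) y = (2 * real k + 3) * MJ (Suc k) y - (real k + 1)^2 * MJ k y"
proof -
  have a: "MJ (Suc (Suc k)) y - real (Suc (Suc k)) * MJ (Suc k) y = y * DJ (Suc (Suc k)) y"
    by (rule R1)
  have b: "DJ (Suc (Suc k)) y - real (Suc k) * DJ (Suc k) y = - y * MJ (Suc (Suc k)) y"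
    by (rule R2)
  have c: "MJ (Suc k) y - real (Suc k) * MJ k y = y * DJ (Suc k) y"
    by (rule R1)
  have "y * (DJ (Suc (Suc k)) y - real (Suc k) * DJ (Suc k) y) = y * (- y * MJ (Suc (Suc k)) y)"
    using b by simp
  then have "y * DJ (Suc (Suc k)) y = real (Suc k) * (y * DJ (Suc k) y) - y^2 * MJ (Suc (Suc k)) y"
    by (simp add: algebra_simps power2_eq_square)
  then have "MJ (Suc (Suc k)) y - real (Suc (Suc k)) * MJ (Suc k) y
      = real (Suc k) * (MJ (Suc k) y - real (Suc k) * MJ k y) - y^2 * MJ (Suc (Suc k)) y"
    using a c by simp
  then show ?thesis by (simp add: algebra_simps power2_eq_square)
qed

definition eJ :: "nat \<Rightarrow> nat \<Rightarrow> real" where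
  "eJ k j = (if 2 * j \<le> k then 1 / (fact (k - 2 * j) * (fact j)^2) else 0)"

definition vJ :: "real \<Rightarrow> nat \<Rightarrow> real" where
  "vJ w k = (\<Sum>j\<le>k. (-w)^j * eJ k j)"

lemma eJ_gt: "k < 2 * j \<Longrightarrow> eJ k j = 0" by (simp add: eJ_def)

lemma vJ_ext: assumes "k \<le> n" shows "vJ w k = (\<Sum>j\<le>n. (-w)^j * eJ k j)"
  unfolding vJ_def
  by (rule sum.mono_neutral_left) (use assms in \<open>auto simp: eJ_gt\<close>)

lemma vJ_0: "vJ w 0 = 1" by (simp add: vJ_def eJ_def)
lemma vJ_1: "vJ w 1 = 1" by (simp add: vJ_def eJ_def)
lemma vJ_1': "vJ w (Suc 0) = 1" by (simp add: vJ_def eJ_def)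

definition eJ' :: "nat \<Rightarrow> nat \<Rightarrow> real" where
  "eJ' k j = (if j = 0 then 0 else eJ k (j - 1))"

lemma shift_sum: "w * vJ w k = - (\<Sum>j\<le>k+2. (-w)^j * eJ' k j)"
proof -
  have "(\<Sum>j\<le>k+2. (-w)^j * eJ' k j) = (\<Sum>j\<le>Suc k. (-w)^j * eJ' k j)"
  proof (rule sum.mono_neutral_right)
    show "\<forall>i\<in>{..k + 2} - {..Suc k}. (- w) ^ i * eJ' k i = 0"
    proof
      fix i assume "i \<in> {..k + 2} - {..Suc k}"
      then have "i = k + 2" by auto
      then show "(- w) ^ i * eJ' k i = 0" by (simp add: eJ'_def eJ_gt)
    qed
  qed auto
  also have "\<dots> = (-w)^0 * eJ' k 0 + (\<Sum>j\<le>k. (-w)^(Suc j) * eJ' k (Suc j))"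
    by (rule sum.atMost_Suc_shift)
  also have "\<dots> = (\<Sum>j\<le>k. (-w) * ((-w)^j * eJ k j))"
    by (simp add: eJ'_def mult.assoc)
  also have "\<dots> = - (w * vJ w k)"
    by (simp only: vJ_def sum_distrib_left[symmetric])
  finally show ?thesis by simp
qed

lemma fact_sq_pred: assumes "j \<ge> 1" shows "1 / (fact (j - 1))^2 = (real j)^2 / (fact j :: real)^2"
proof -
  have "fact j = real j * fact (j - 1)"
    using assms by (metis fact_nonzero fact_num_eq_if of_nat_eq_0_iff not_one_le_zero)
  then show ?thesis using assms by (simp add: power_mult_distrib)
qed

lemma eJ_pointwise:
  "(real k + 2)^2 * eJ (k+2) j = (2 * real k + 3) * eJ (k+1) j - eJ k j + 4 * eJ' k j"
proof (cases "k + 2 < 2 * j")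
  case True
  then show ?thesis by (auto simp: eJ_def eJ'_def)
next
  case False
  then have le: "2 * j \<le> k + 2" by simp
  show ?thesis
  proof (cases "2 * j = k + 2")
    case eq: True
    then have j1: "j \<ge> 1" by simp
    have e2: "eJ (k+2) j = 1 / (fact j)^2" using eq by (simp add: eJ_def)
    have e1: "eJ (k+1) j = 0" using eq by (simp add: eJ_def)
    have e0: "eJ k j = 0" using eq by (simp add: eJ_def)
    have e': "eJ' k j = (real j)^2 / (fact j)^2"
      using eq j1 fact_sq_pred[OF j1] by (simp add: eJ'_def eJ_def)
    have kk: "real k + 2 = 2 * real j" using eq by (metis of_nat_add of_nat_mult of_nat_numeral)
    show ?thesis unfolding e2 e1 e0 e' kk by (simp add: field_simps power2_eq_square)
  next
    case ne: False
    show ?thesis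
    proof (cases "2 * j = k + 1")
      case eq: True
      then have j1: "j \<ge> 1" by simp
      have e2: "eJ (k+2) j = 1 / (fact j)^2" using eq by (simp add: eJ_def)
      have e1: "eJ (k+1) j = 1 / (fact j)^2" using eq by (simp add: eJ_def)
      have e0: "eJ k j = 0" using eq by (simp add: eJ_def)
      have "k - 2 * (j - 1) = 1" using eq by simp
      then have e': "eJ' k j = (real j)^2 / (fact j)^2"
        using eq j1 fact_sq_pred[OF j1] by (simp add: eJ'_def eJ_def)
      have kk: "real k + 1 = 2 * real j" using eq by (metis of_nat_add of_nat_mult of_nat_numeral of_nat_1)
      have kk': "real k = 2 * real j - 1" using kk by simp
      show ?thesis unfolding e2 e1 e0 e' kk' by (simp add: field_simps power2_eq_square)
    next
      case ne2: False
      with le ne have le2: "2 * j \<le> k" by simp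
      define m where "m = k - 2 * j"
      have km: "k = m + 2 * j" using le2 by (simp add: m_def)
      define A where "A = 1 / (fact m * (fact j)^2 :: real)"
      have fm1: "fact (m + 1) = (real m + 1) * (fact m :: real)" by (simp add: fact_Suc algebra_simps)
      have fm2: "fact (m + 2) = (real m + 2) * (real m + 1) * (fact m :: real)"
        using fact_Suc[of "m+1"] fm1 by (simp add: algebra_simps)
      have e0: "eJ k j = A" by (simp add: eJ_def A_def km)
      have e1: "eJ (k+1) j = A / (real m + 1)"
      proof -
        have "k + 1 - 2 * j = m + 1" by (simp add: km)
        then show ?thesis using le2 by (simp add: eJ_def A_def fm1 field_simps)
      qed
      have e2: "eJ (k+2) j = A / ((real m + 1) * (real m + 2))"
      proof -
        have "k + 2 - 2 * j = m + 2" by (simp add: km)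
        then show ?thesis using le2 by (simp add: eJ_def A_def fm2 field_simps)
      qed
      have e': "eJ' k j = (real j)^2 * A / ((real m + 1) * (real m + 2))"
      proof (cases "j = 0")
        case True then show ?thesis by (simp add: eJ'_def)
      next
        case False
        then have j1: "j \<ge> 1" by simp
        have "k - 2 * (j - 1) = m + 2" using j1 by (simp add: km)
        then have "eJ' k j = 1 / (fact (m + 2) * (fact (j - 1))^2)"
          using False le2 by (simp add: eJ'_def eJ_def)
        also have "\<dots> = (1 / fact (m + 2)) * (1 / (fact (j - 1))^2)" by simp
        also have "\<dots> = (1 / fact (m + 2)) * ((real j)^2 / (fact j)^2)" by (simp only: fact_sq_pred[OF j1])
        also have "\<dots> = (real j)^2 * A / ((real m + 1) * (real m + 2))"
          by (simp add: fm2 A_def field_simps)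
        finally show ?thesis .
      qed
      have kr: "real k = real m + 2 * real j" by (simp add: km)
      define B where "B = A / ((real m + 1) * (real m + 2))"
      have nz1: "real m + 1 \<noteq> 0" and nz2: "real m + 2 \<noteq> 0" by linarith+
      have nz: "(real m + 1) * (real m + 2) \<noteq> 0" using nz1 nz2 by simp
      have b0: "A = ((real m + 1) * (real m + 2)) * B"
        unfolding B_def by (simp only: times_divide_eq_right nonzero_mult_div_cancel_left[OF nz])
      have b1: "A / (real m + 1) = (real m + 2) * B"
      proof -
        have "A / (real m + 1) = ((real m + 1) * ((real m + 2) * B)) / (real m + 1)"
          by (simp only: b0 mult.assoc)
        also have "\<dots> = (real m + 2) * B" by (rule nonzero_mult_div_cancel_left[OF nz1])
        finally show ?thesis .
      qed
      have b': "(real j)^2 * A / ((real m + 1) * (real m + 2)) = (real j)^2 * B" by (simp add: B_def)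
      have eq1: "eJ (k+1) j = (real m + 2) * B" using e1 b1 by simp
      have eq2: "eJ (k+2) j = B" using e2 B_def by simp
      have eq': "eJ' k j = (real j)^2 * B" using e' b' by simp
      have eq0: "eJ k j = (real m + 1) * (real m + 2) * B" using e0 b0 by simp
      show ?thesis unfolding eq0 eq1 eq2 eq' kr by (simp add: algebra_simps power2_eq_square)
    qed
  qed
qed

lemma vJ_rec: "(real k + 2)^2 * vJ w (k+2) = (2 * real k + 3) * vJ w (k+1) - (1 + 4 * w) * vJ w k"
proof -
  have "(real k + 2)^2 * vJ w (k+2) = (\<Sum>j\<le>k+2. (-w)^j * ((real k + 2)^2 * eJ (k+2) j))"
    unfolding vJ_def by (simp add: sum_distrib_left algebra_simps)
  also have "\<dots> = (\<Sum>j\<le>k+2. (2 * real k + 3) * ((-w)^j * eJ (k+1) j) - (-w)^j * eJ k j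
      + 4 * ((-w)^j * eJ' k j))"
  proof (rule sum.cong[OF refl])
    fix j
    have p: "(real k + 2)^2 * eJ (k+2) j = (2 * real k + 3) * eJ (k+1) j - eJ k j + 4 * eJ' k j"
      by (rule eJ_pointwise)
    show "(-w)^j * ((real k + 2)^2 * eJ (k+2) j) = (2 * real k + 3) * ((-w)^j * eJ (k+1) j) - (-w)^j * eJ k j
      + 4 * ((-w)^j * eJ' k j)"
      unfolding p by (simp add: algebra_simps)
  qed
  also have "\<dots> = (2 * real k + 3) * (\<Sum>j\<le>k+2. (-w)^j * eJ (k+1) j) - (\<Sum>j\<le>k+2. (-w)^j * eJ k j)
      + 4 * (\<Sum>j\<le>k+2. (-w)^j * eJ' k j)"
    by (simp only: sum.distrib sum_subtractf sum_distrib_left[symmetric])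
  also have "\<dots> = (2 * real k + 3) * vJ w (k+1) - vJ w k + 4 * (- (w * vJ w k))"
  proof -
    have a: "(\<Sum>j\<le>k+2. (-w)^j * eJ (k+1) j) = vJ w (k+1)" by (rule vJ_ext[symmetric]) simp
    have b: "(\<Sum>j\<le>k+2. (-w)^j * eJ k j) = vJ w k" by (rule vJ_ext[symmetric]) simp
    have c: "(\<Sum>j\<le>k+2. (-w)^j * eJ' k j) = - (w * vJ w k)" using shift_sum[of w k] by simp
    show ?thesis by (simp only: a b c)
  qed
  finally show ?thesis by (simp add: algebra_simps)
qed

definition QJ :: "real \<Rightarrow> nat \<Rightarrow> real" where
  "QJ y k = (fact k)^2 / (1 + y^2)^k / sqrt (1 + y^2)"

lemma MJ_closed: "MJ k y = QJ y k * vJ (y^2/4) k"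
proof -
  define s where "s = 1 + y^2"
  have s: "s > 0" unfolding s_def by (simp add: add_pos_nonneg)
  have Qs: "QJ y (Suc k) = QJ y k * (real k + 1)^2 / s" for k
    unfolding QJ_def s_def[symmetric] by (simp add: fact_Suc field_simps power2_eq_square)
  have "MJ k y = QJ y k * vJ (y^2/4) k \<and> MJ (Suc k) y = QJ y (Suc k) * vJ (y^2/4) (Suc k)"
  proof (induction k)
    case 0
    have m0: "MJ 0 y = 1 / sqrt s" using MJ0 by (simp add: s_def)
    have "s * MJ 1 y = MJ 0 y" using MJ1[of y] by (simp add: s_def)
    then have m1: "MJ 1 y = 1 / (s * sqrt s)" using m0 s by (simp add: field_simps)
    have q0: "QJ y 0 = 1 / sqrt s" by (simp add: QJ_def s_def)
    have q1: "QJ y 1 = 1 / (s * sqrt s)" by (simp add: QJ_def s_def)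
    show ?case using m0 m1 q0 q1 by (simp add: vJ_0 vJ_1')
  next
    case (Suc k)
    have IH1: "MJ k y = QJ y k * vJ (y^2/4) k" and IH2: "MJ (Suc k) y = QJ y (Suc k) * vJ (y^2/4) (Suc k)"
      using Suc.IH by auto
    have r: "s * MJ (Suc (Suc k)) y = (2 * real k + 3) * MJ (Suc k) y - (real k + 1)^2 * MJ k y"
      using MJ_rec[of y k] by (simp add: s_def)
    have v: "(real k + 2)^2 * vJ (y^2/4) (k+2) = (2 * real k + 3) * vJ (y^2/4) (k+1) - s * vJ (y^2/4) k"
      using vJ_rec[of k "y^2/4"] by (simp add: s_def)
    have "s * MJ (Suc (Suc k)) y = QJ y (Suc k) * ((2 * real k + 3) * vJ (y^2/4) (k+1) - s * vJ (y^2/4) k)"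
      unfolding r IH1 IH2 using Qs[of k] s by (simp add: field_simps)
    also have "\<dots> = QJ y (Suc k) * ((real k + 2)^2 * vJ (y^2/4) (k+2))" by (simp only: v)
    also have "\<dots> = s * (QJ y (Suc (Suc k)) * vJ (y^2/4) (Suc (Suc k)))"
      using Qs[of "Suc k"] s by (simp add: field_simps)
    finally have "MJ (Suc (Suc k)) y = QJ y (Suc (Suc k)) * vJ (y^2/4) (Suc (Suc k))"
      using s by simp
    then show ?case using IH2 by simp
  qed
  then show ?thesis by simp
qed


lemma pow_fact_le_exp: assumes "x \<ge> 0" shows "x^n / fact n \<le> exp (x::real)"
proof -
  have s: "(\<lambda>n. x^n / fact n) sums exp x"
    using exp_converges[of x] by (simp add: divide_inverse mult.commute)
  have "sum (\<lambda>n. x^n / fact n) {n} \<le> suminf (\<lambda>n. x^n / fact n)"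
    by (rule sum_le_suminf) (use s assms in \<open>auto simp: sums_iff\<close>)
  then show ?thesis using s by (simp add: sums_iff)
qed

lemma le_sq: "1 \<le> (F::real) \<Longrightarrow> F \<le> F^2"
  using mult_left_mono[of 1 F F] by (simp add: power2_eq_square)

lemma summable_odd: assumes "B \<ge> 0" shows "summable (\<lambda>m. B^(2*m+1) / fact (2*m+1) :: real)"
proof (rule summable_comparison_test[OF _ summable_mult[OF summable_exp[of "B^2"], of B]])
  show "\<exists>N. \<forall>n\<ge>N. norm (B^(2*n+1) / fact (2*n+1)) \<le> B * (inverse (fact n) * (B^2)^n)"
  proof (intro exI allI impI)
    fix n :: nat
    have f: "fact n \<le> (fact (2*n+1) :: real)" by (intro fact_mono) simp
    have e: "B^(2*n+1) = B * (B^2)^n"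
      by (metis power_add power_mult power_one_right mult.commute)
    have "norm (B^(2*n+1) / fact (2*n+1)) = B^(2*n+1) / fact (2*n+1)"
      using assms by simp
    also have "\<dots> = B * (B^2)^n / fact (2*n+1)" by (simp only: e)
    also have "\<dots> \<le> B * (B^2)^n / fact n"
      by (intro divide_left_mono f) (use assms in auto)
    finally show "norm (B^(2*n+1) / fact (2*n+1)) \<le> B * (inverse (fact n) * (B^2)^n)"
      by (simp add: field_simps)
  qed
qed

lemma summable_sq_fact: "summable (\<lambda>j. \<bar>X\<bar>^j / (fact j)^2 :: real)"
proof (rule summable_comparison_test[OF _ summable_exp[of "\<bar>X\<bar>"]])
  show "\<exists>N. \<forall>n\<ge>N. norm (\<bar>X\<bar>^n / (fact n)^2) \<le> inverse (fact n) * \<bar>X\<bar>^n"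
  proof (intro exI allI impI)
    fix n :: nat
    have f1: "(1::real) \<le> fact n" by simp
    have "norm (\<bar>X\<bar>^n / (fact n)^2) = \<bar>X\<bar>^n / (fact n)^2" by simp
    also have "\<dots> \<le> \<bar>X\<bar>^n / fact n"
      by (intro divide_left_mono) (auto simp: power2_eq_square f1)
    finally show "norm (\<bar>X\<bar>^n / (fact n)^2) \<le> inverse (fact n) * \<bar>X\<bar>^n"
      by (simp add: field_simps)
  qed
qed

lemma bei_sums: "(\<lambda>m. (-1)^m * (x/2)^(4*m+2) / (fact (2*m+1))^2) sums kelvin_bei x"
proof -
  have "summable (\<lambda>m. (-1)^m * (x/2)^(4*m+2) / (fact (2*m+1))^2)"
  proof (rule summable_comparison_test[OF _ summable_odd[of "(x/2)^2"]])
    show "\<exists>N. \<forall>n\<ge>N. norm ((-1)^n * (x/2)^(4*n+2) / (fact (2*n+1))^2) \<le> ((x/2)^2)^(2*n+1) / fact (2*n+1)"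
    proof (intro exI allI impI)
      fix n :: nat
      have f1: "(1::real) \<le> fact (2*n+1)" by (rule fact_ge_1)
      have "4*n+2 = 2*(2*n+1)" by simp
      then have e: "(x/2)^(4*n+2) = ((x/2)^2)^(2*n+1)"
        by (simp only: power_mult)
      have "norm ((-1)^n * (x/2)^(4*n+2) / (fact (2*n+1))^2) = ((x/2)^2)^(2*n+1) / (fact (2*n+1))^2"
        unfolding e by (simp add: abs_mult)
      also have "\<dots> \<le> ((x/2)^2)^(2*n+1) / fact (2*n+1)"
        by (rule frac_le[OF _ order.refl fact_gt_zero le_sq[OF f1]]) simp
      finally show "norm ((-1)^n * (x/2)^(4*n+2) / (fact (2*n+1))^2) \<le> ((x/2)^2)^(2*n+1) / fact (2*n+1)" .
    qed
  qed simp
  then show ?thesis unfolding kelvin_bei_def by (simp add: summable_sums)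
qed

lemma bei_arg:
  assumes "t \<ge> 0" "s \<ge> 0"
  shows "(a * sqrt (s * t) / 2)^(4*m+2) = (a^2/4 * s * t)^(2*m+1)"
proof -
  have "4*m+2 = 2*(2*m+1)" by simp
  then have "(a * sqrt (s * t) / 2)^(4*m+2) = ((a * sqrt (s * t) / 2)^2)^(2*m+1)"
    by (simp only: power_mult)
  also have "(a * sqrt (s * t) / 2)^2 = a^2/4 * s * t"
  proof -
    have q: "(sqrt (s * t))^2 = s * t" using assms by simp
    show ?thesis by (simp add: power_mult_distrib power_divide q)
  qed
  finally show ?thesis .
qed


definition coefB :: "real \<Rightarrow> real \<Rightarrow> nat \<Rightarrow> real" where
  "coefB a y m = (-1)^m * (a^2/4 * (1 + y^2))^(2*m+1) / (fact (2*m+1))^2"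

definition termB :: "real \<Rightarrow> real \<Rightarrow> nat \<Rightarrow> real \<Rightarrow> real" where
  "termB a y m t = coefB a y m * (exp (-t) * t^(2*m+1) * bessel_J0 (y * t))"

lemma integrand_sums:
  assumes t: "t \<ge> 0"
  shows "(\<lambda>m. termB a y m t) sums (exp (- t) * kelvin_bei (a * sqrt ((1 + y^2) * t)) * bessel_J0 (y * t))"
proof -
  have s: "1 + y^2 \<ge> 0" by (simp add: add_nonneg_nonneg)
  have "(\<lambda>m. (-1)^m * (a * sqrt ((1 + y^2) * t) / 2)^(4*m+2) / (fact (2*m+1))^2)
      sums kelvin_bei (a * sqrt ((1 + y^2) * t))"
    by (rule bei_sums)
  moreover have "(-1)^m * (a * sqrt ((1 + y^2) * t) / 2)^(4*m+2) / (fact (2*m+1))^2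
      = coefB a y m * t^(2*m+1)" for m
  proof -
    have p: "(a^2/4 * (1+y^2) * t)^(2*m+1) = (a^2/4 * (1+y^2))^(2*m+1) * t^(2*m+1)"
      by (rule power_mult_distrib)
    show ?thesis unfolding bei_arg[OF t s] p coefB_def by (simp add: field_simps)
  qed
  ultimately have "(\<lambda>m. coefB a y m * t^(2*m+1)) sums kelvin_bei (a * sqrt ((1 + y^2) * t))"
    by simp
  then have "(\<lambda>m. coefB a y m * t^(2*m+1) * (exp (-t) * bessel_J0 (y * t)))
      sums (kelvin_bei (a * sqrt ((1 + y^2) * t)) * (exp (-t) * bessel_J0 (y * t)))"
    by (rule sums_mult2)
  then show ?thesis unfolding termB_def by (simp add: mult_ac)
qed

lemma term_bound_gen:
  fixes C t :: real
  assumes t: "t \<ge> 0" and C: "C \<ge> 0"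
  shows "C^k * (exp (-t) * t^k) / (fact k)^2 \<le> exp (-(1/2) * t) * ((2*C)^k / fact k)"
proof -
  have e: "(t/2)^k / fact k \<le> exp (t/2)" by (rule pow_fact_le_exp) (use t in simp)
  have "C^k * (exp (-t) * t^k) / (fact k)^2 = exp (-t) * ((2*C)^k / fact k) * ((t/2)^k / fact k)"
    by (simp add: power_mult_distrib power_divide power2_eq_square field_simps)
  also have "\<dots> \<le> exp (-t) * ((2*C)^k / fact k) * exp (t/2)"
    by (intro mult_left_mono e) (use C in auto)
  also have "\<dots> = exp (-(1/2) * t) * ((2*C)^k / fact k)"
    by (simp add: mult_ac exp_add[symmetric])
  finally show ?thesis .
qed

lemma termB_bound:
  assumes t: "t \<ge> 0"
  shows "\<bar>termB a y m t\<bar> \<le> exp (-(1/2) * t) * ((2 * \<bar>a^2/4 * (1 + y^2)\<bar>)^(2*m+1) / fact (2*m+1))"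
proof -
  let ?C = "\<bar>a^2/4 * (1 + y^2)\<bar>"
  have "\<bar>termB a y m t\<bar> = ?C^(2*m+1) / (fact (2*m+1))^2 * (exp (-t) * t^(2*m+1) * \<bar>bessel_J0 (y * t)\<bar>)"
    unfolding termB_def coefB_def using t by (simp add: abs_mult power_abs)
  also have "\<dots> \<le> ?C^(2*m+1) / (fact (2*m+1))^2 * (exp (-t) * t^(2*m+1) * 1)"
    by (intro mult_left_mono J0_bound) (use t in auto)
  also have "\<dots> = ?C^(2*m+1) * (exp (-t) * t^(2*m+1)) / (fact (2*m+1))^2" by simp
  also have "\<dots> \<le> exp (-(1/2) * t) * ((2 * ?C)^(2*m+1) / fact (2*m+1))"
    by (rule term_bound_gen[OF t]) simp
  finally show ?thesis .
qed

lemma termB_integrable: "termB a y m integrable_on {0..}"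
  unfolding termB_def[abs_def] by (intro integrable_on_mult_right intJ0')

lemma termB_integral: "integral {0..} (termB a y m) = coefB a y m * MJ (2*m+1) y"
  unfolding termB_def[abs_def] MJ_def by (simp add: integral_mult_right intJ0')

lemma coef_aux:
  fixes F S c X v :: real
  assumes "F \<noteq> 0" "S > 0"
  shows "X * (c * S)^k / F^2 * (F^2 / S^k / sqrt S * v) = X * c^k * v / sqrt S"
  using assms by (simp add: power_mult_distrib field_simps)

lemma coefB_MJ:
  "coefB a y m * MJ (2*m+1) y = (-1)^m * (a^2/4)^(2*m+1) * vJ (y^2/4) (2*m+1) / sqrt (1 + y^2)"
proof -
  have s: "1 + y^2 > 0" by (simp add: add_pos_nonneg)
  show ?thesis
    unfolding MJ_closed QJ_def coefB_def
    by (rule coef_aux[OF fact_nonzero s])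
qed

lemma LHS_sums:
  "(\<lambda>m. coefB a y m * MJ (2*m+1) y) sums
     integral {0..} (\<lambda>t. exp (- t) * kelvin_bei (a * sqrt ((1 + y^2) * t)) * bessel_J0 (y * t))"
  and LHS_integrable:
  "(\<lambda>t. exp (- t) * kelvin_bei (a * sqrt ((1 + y^2) * t)) * bessel_J0 (y * t)) integrable_on {0..}"
proof -
  define C where "C = \<bar>a^2/4 * (1 + y^2)\<bar>"
  define B where "B = (\<lambda>m. (2*C)^(2*m+1) / fact (2*m+1) :: real)"
  have C0: "C \<ge> 0" by (simp add: C_def)
  have sB: "summable B" unfolding B_def by (rule summable_odd) (use C0 in simp)
  define K where "K = suminf B"
  have B0: "B m \<ge> 0" for m unfolding B_def using C0 by simp
  have BK: "(\<Sum>m<n. B m) \<le> K" for n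
    unfolding K_def by (rule sum_le_suminf[OF sB]) (auto simp: B0)
  define f where "f = (\<lambda>n t. \<Sum>m<n. termB a y m t)"
  define h where "h = (\<lambda>t::real. exp (-(1/2) * t) * K)"
  define g where "g = (\<lambda>t. exp (- t) * kelvin_bei (a * sqrt ((1 + y^2) * t)) * bessel_J0 (y * t))"
  have fi: "f n integrable_on {0..}" for n
    unfolding f_def by (intro integrable_sum termB_integrable) simp
  have hi: "h integrable_on {0..}"
    unfolding h_def by (intro integrable_on_mult_left integrable_on_exp_minus_to_infinity) simp
  have le: "norm (f n t) \<le> h t" if t: "t \<in> {0..}" for n t
  proof -
    have t0: "t \<ge> 0" using t by simp
    have "norm (f n t) \<le> (\<Sum>m<n. \<bar>termB a y m t\<bar>)"
      unfolding f_def by (simp add: sum_abs)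
    also have "\<dots> \<le> (\<Sum>m<n. exp (-(1/2) * t) * B m)"
      by (intro sum_mono) (unfold B_def C_def, rule termB_bound[OF t0])
    also have "\<dots> = exp (-(1/2) * t) * (\<Sum>m<n. B m)" by (simp add: sum_distrib_left)
    also have "\<dots> \<le> exp (-(1/2) * t) * K" by (intro mult_left_mono BK) simp
    finally show ?thesis by (simp add: h_def)
  qed
  have conv: "(\<lambda>n. f n t) \<longlonglongrightarrow> g t" if "t \<in> {0..}" for t
    using integrand_sums[of t a y] that unfolding f_def g_def sums_def by simp
  have dc: "g integrable_on {0..}" "(\<lambda>n. integral {0..} (f n)) \<longlonglongrightarrow> integral {0..} g"
    by (rule dominated_convergence[OF fi hi le conv], assumption+)+
  have "integral {0..} (f n) = (\<Sum>m<n. coefB a y m * MJ (2*m+1) y)" for n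
    unfolding f_def by (simp add: integral_sum termB_integrable termB_integral)
  with dc(2) have "(\<lambda>n. \<Sum>m<n. coefB a y m * MJ (2*m+1) y) \<longlonglongrightarrow> integral {0..} g" by simp
  then show "(\<lambda>m. coefB a y m * MJ (2*m+1) y) sums integral {0..} g" unfolding sums_def .
  show "g integrable_on {0..}" by (rule dc(1))
qed


lemma vJ_odd: "vJ w (2*k+1) = (\<Sum>j\<le>k. (-w)^j / (fact (2*k+1-2*j) * (fact j)^2))"
proof -
  have "vJ w (2*k+1) = (\<Sum>j\<le>k. (-w)^j * eJ (2*k+1) j)"
    unfolding vJ_def
  proof (rule sum.mono_neutral_right)
    show "\<forall>i\<in>{..2*k+1} - {..k}. (- w) ^ i * eJ (2*k+1) i = 0"
      by (auto simp: eJ_gt)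
  qed auto
  also have "\<dots> = (\<Sum>j\<le>k. (-w)^j / (fact (2*k+1-2*j) * (fact j)^2))"
    by (intro sum.cong refl) (simp add: eJ_def)
  finally show ?thesis .
qed

lemma ct_aux:
  fixes sd sj F1 F2 X Z W :: real
  assumes "sj * sj = 1"
  shows "sd / F1 * X * (Z * W / F2) = (sd * sj) * (X * Z) * (sj * W / (F1 * F2))"
proof -
  have "(sd * sj) * (X * Z) * (sj * W / (F1 * F2)) = (sj * sj) * (sd * X * Z * W * (inverse F1 * inverse F2))"
    by (simp add: divide_inverse algebra_simps)
  also have "\<dots> = sd * X * Z * W * (inverse F1 * inverse F2)" using assms by simp
  also have "\<dots> = sd / F1 * X * (Z * W / F2)" by (simp add: divide_inverse algebra_simps)
  finally show ?thesis by simp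
qed

lemma cauchy_term:
  fixes c w :: real
  assumes "j \<le> k"
  shows "((-1)^(k-j) / fact (2*(k-j)+1) * c^(2*(k-j)+1)) * ((c^2 * w)^j / (fact j)^2)
       = (-1)^k * c^(2*k+1) * ((-w)^j / (fact (2*k+1-2*j) * (fact j)^2))"
proof -
  obtain d where k: "k = j + d" using assms le_Suc_ex by blast
  have e1: "k - j = d" and e2: "2*k+1-2*j = 2*d+1" using k by auto
  have p1: "(-1::real)^k = (-1)^d * (-1)^j" by (simp add: k power_add)
  have p2: "c^(2*k+1) = c^(2*d+1) * (c^2)^j"
  proof -
    have "2*k+1 = (2*d+1) + 2*j" using k by simp
    then show ?thesis by (simp only: power_add power_mult)
  qed
  have p3: "(-w)^j = (-1)^j * w^j" by (rule power_minus)
  have p4: "(-1::real)^j * (-1)^j = 1" by (simp add: power_add[symmetric])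
  have p5: "(c^2 * w)^j = (c^2)^j * w^j" by (rule power_mult_distrib)
  show ?thesis unfolding e1 e2 p1 p2 p3 p5
    by (rule ct_aux[OF p4])
qed

lemma cauchy_sums:
  fixes c w :: real
  shows "(\<lambda>k. (-1)^k * c^(2*k+1) * vJ w (2*k+1)) sums
     (sin c * (\<Sum>j. (c^2 * w)^j / (fact j)^2))"
proof -
  define A where "A = (\<lambda>i. (-1)^i / fact (2*i+1) * c^(2*i+1) :: real)"
  define B where "B = (\<lambda>j. (c^2 * w)^j / (fact j)^2 :: real)"
  have sA: "summable (\<lambda>i. norm (A i))"
  proof -
    have "norm (A i) = \<bar>c\<bar>^(2*i+1) / fact (2*i+1)" for i
      by (simp add: A_def abs_mult power_abs)
    then show ?thesis using summable_odd[of "\<bar>c\<bar>"] by simp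
  qed
  have sB: "summable (\<lambda>j. norm (B j))"
  proof -
    have "norm (B j) = \<bar>c^2 * w\<bar>^j / (fact j)^2" for j
      by (simp add: B_def abs_mult power_abs)
    then show ?thesis using summable_sq_fact[of "c^2 * w"] by simp
  qed
  have "(\<lambda>k. \<Sum>i\<le>k. A i * B (k - i)) sums (suminf A * suminf B)"
    by (rule Cauchy_product_sums[OF sA sB])
  moreover have "suminf A = sin c"
    using sin_paired[of c] unfolding A_def by (simp add: sums_iff)
  moreover have "(\<Sum>i\<le>k. A i * B (k - i)) = (-1)^k * c^(2*k+1) * vJ w (2*k+1)" for k
  proof -
    have "(\<Sum>i\<le>k. A i * B (k - i)) = (\<Sum>j\<le>k. A (k - j) * B j)"
      unfolding atMost_atLeast0 by (subst sum.atLeastAtMost_rev) simp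
    also have "\<dots> = (\<Sum>j\<le>k. (-1)^k * c^(2*k+1) * ((-w)^j / (fact (2*k+1-2*j) * (fact j)^2)))"
    proof (rule sum.cong[OF refl])
      fix j assume "j \<in> {..k}"
      then have jk: "j \<le> k" by simp
      show "A (k - j) * B j = (-1)^k * c^(2*k+1) * ((-w)^j / (fact (2*k+1-2*j) * (fact j)^2))"
        unfolding A_def B_def by (rule cauchy_term[OF jk])
    qed
    also have "\<dots> = (-1)^k * c^(2*k+1) * vJ w (2*k+1)"
      by (simp only: vJ_odd sum_distrib_left)
    finally show ?thesis .
  qed
  ultimately show ?thesis unfolding B_def by simp
qed

theorem mainTheorem6:
  fixes a y :: real
  shows "((\<lambda>t. exp (- t) * kelvin_bei (a * sqrt ((1 + y^2) * t)) * bessel_J0 (y * t))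
           has_integral
          (1 / sqrt (1 + y^2) * bessel_I0 (a^2 * y / 4) * sin (a^2 / 4))) {0..}"
proof -
  let ?g = "\<lambda>t. exp (- t) * kelvin_bei (a * sqrt ((1 + y^2) * t)) * bessel_J0 (y * t)"
  have I0: "bessel_I0 (a^2 * y / 4) = (\<Sum>j. ((a^2/4)^2 * (y^2/4))^j / (fact j)^2)"
    unfolding bessel_I0_def
  proof (intro suminf_cong)
    fix j
    have "(a^2 * y / 4 / 2)^(2*j) = ((a^2 * y / 4 / 2)^2)^j" by (simp only: power_mult)
    also have "(a^2 * y / 4 / 2)^2 = (a^2/4)^2 * (y^2/4)"
      by (simp add: power_mult_distrib power_divide)
    finally show "(a^2 * y / 4 / 2)^(2*j) / (fact j)^2 = ((a^2/4)^2 * (y^2/4))^j / (fact j)^2"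
      by simp
  qed
  have s1: "(\<lambda>k. (-1)^k * (a^2/4)^(2*k+1) * vJ (y^2/4) (2*k+1)) sums (sin (a^2/4) * bessel_I0 (a^2 * y / 4))"
    using cauchy_sums[of "a^2/4" "y^2/4"] unfolding I0 .
  have s2: "(\<lambda>k. (-1)^k * (a^2/4)^(2*k+1) * vJ (y^2/4) (2*k+1) / sqrt (1 + y^2)) sums
      (sin (a^2/4) * bessel_I0 (a^2 * y / 4) / sqrt (1 + y^2))"
    by (rule sums_divide[OF s1])
  have s3: "(\<lambda>k. (-1)^k * (a^2/4)^(2*k+1) * vJ (y^2/4) (2*k+1) / sqrt (1 + y^2)) sums integral {0..} ?g"
    using LHS_sums[of a y] unfolding coefB_MJ .
  have "integral {0..} ?g = sin (a^2/4) * bessel_I0 (a^2 * y / 4) / sqrt (1 + y^2)"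
    using sums_unique2[OF s3 s2] .
  moreover have "(?g has_integral integral {0..} ?g) {0..}"
    by (rule integrable_integral[OF LHS_integrable])
  ultimately show ?thesis by (simp add: field_simps)
qed


end
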